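(* In the single-item all-pay auction with budgets described in the context, let $L=\min\{B_1,B_2,v_1,v_2\}$. Then in any Nash equilibrium $(F_1,F_2)$ we have $\overline{x}_1=\overline{x}_2=L$.
   Context: Single-item all-pay auction with budgets. There are two players $i\in\{1,2\}$; $-i$ denotes the opponent of $i$. Player $i$ has budget $B_i\ge 0$ and valuation $v_i>0$ for a single item. A pure strategy of player $i$ is a bid $x_i\in[0,B_i]$; a mixed strategy is a probability distribution on $[0,B_i]$, described by its cumulative distribution function $F_i$. The player with the higher bid wins the item. Tie-breaking: if $x_1=x_2=\min\{B_1,B_2,v_1,v_2\}$ and $\min\{B_i,v_i\}>\min\{B_{-i},v_{-i}\}$ for some $i$, then player $i$ wins; in all other ties each player wins with probability $\frac12$. Player $i$'s utility is $v_i-x_i$ if he wins and $-x_i$ if he loses. A Nash equilibrium is a pair $(F_1,F_2)$ such that each $F_i$ maximizes player $i$'s expected utility against $F_{-i}$ over all mixed strategies on $[0,B_i]$. $Supp(F_i)$ is the support of $F_i$, $\overline{x}_i=\sup Supp(F_i)$ and $\underline{x}_i=\inf Supp(F_i)$. *)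

theory Defs
  imports "HOL-Probability.Probability"
begin

text \<open>Mixed strategies are Borel probability measures on the reals concentrated
on the interval [0, B] (equivalently, distributions described by a CDF).\<close>

definition mixed_strategy :: "real \<Rightarrow> real measure \<Rightarrow> bool" where
  "mixed_strategy B M \<longleftrightarrow> prob_space M \<and> sets M = sets borel \<and> measure M {0..B} = 1"

text \<open>Support of a Borel measure on the reals: the smallest closed set of full measure,
i.e. the set of points every open neighbourhood of which has positive mass.\<close>

definition Supp :: "real measure \<Rightarrow> real set" where
  "Supp M = {x. \<forall>e>0. measure M (ball x e) > 0}"

definition L_val :: "real \<Rightarrow> real \<Rightarrow> real \<Rightarrow> real \<Rightarrow> real" where
  "L_val B1 B2 v1 v2 = min (min B1 B2) (min v1 v2)"

definition win_prob :: "real \<Rightarrow> real \<Rightarrow> real \<Rightarrow> real \<Rightarrow> real \<Rightarrow> real \<Rightarrow> real" where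
  "win_prob Bi vi Bo vo xi xo =
     (if xi > xo then 1
      else if xi < xo then 0
      else if xi = L_val Bi Bo vi vo \<and> min Bi vi > min Bo vo then 1
      else if xi = L_val Bi Bo vi vo \<and> min Bo vo > min Bi vi then 0
      else 1/2)"

definition utility :: "real \<Rightarrow> real \<Rightarrow> real \<Rightarrow> real \<Rightarrow> real \<Rightarrow> real \<Rightarrow> real" where
  "utility Bi vi Bo vo xi xo = vi * win_prob Bi vi Bo vo xi xo - xi"

definition exp_utility :: "real \<Rightarrow> real \<Rightarrow> real \<Rightarrow> real \<Rightarrow> real measure \<Rightarrow> real measure \<Rightarrow> real" where
  "exp_utility Bi vi Bo vo Mi Mo =
     (\<integral>xi. (\<integral>xo. utility Bi vi Bo vo xi xo \<partial>Mo) \<partial>Mi)"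

definition nash_eq :: "real \<Rightarrow> real \<Rightarrow> real \<Rightarrow> real \<Rightarrow> real measure \<Rightarrow> real measure \<Rightarrow> bool" where
  "nash_eq B1 v1 B2 v2 F1 F2 \<longleftrightarrow>
     mixed_strategy B1 F1 \<and> mixed_strategy B2 F2 \<and>
     (\<forall>G. mixed_strategy B1 G \<longrightarrow> exp_utility B1 v1 B2 v2 G F2 \<le> exp_utility B1 v1 B2 v2 F1 F2) \<and>
     (\<forall>G. mixed_strategy B2 G \<longrightarrow> exp_utility B2 v2 B1 v1 G F1 \<le> exp_utility B2 v2 B1 v1 F2 F1)"

end

theory Submission imports Defs begin

lemma win_prob_meas: "(\<lambda>p. win_prob Bi vi Bo vo (fst p) (snd p)) \<in> borel_measurable borel"
proof -
  have "(\<lambda>p. win_prob Bi vi Bo vo (fst p) (snd p)) \<in> borel_measurable (borel \<Otimes>\<^sub>M borel)"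
    unfolding win_prob_def by measurable
  then show ?thesis by (simp add: borel_prod)
qed

lemma win_prob_bounds: "0 \<le> win_prob Bi vi Bo vo x y" "win_prob Bi vi Bo vo x y \<le> 1"
  unfolding win_prob_def by auto

lemma ms_props:
  assumes "mixed_strategy B M"
  shows "prob_space M" "sets M = sets borel" "space M = UNIV" "AE x in M. 0 \<le> x \<and> x \<le> B"
proof -
  show p: "prob_space M" and s: "sets M = sets borel" using assms unfolding mixed_strategy_def by auto
  show sp: "space M = UNIV" using sets_eq_imp_space_eq[OF s] by simp
  interpret prob_space M by fact
  have "{0..B} \<in> events" using s by simp
  then have "AE x in M. x \<in> {0..B}" using assms unfolding mixed_strategy_def
    by (intro AE_prob_1) auto
  then show "AE x in M. 0 \<le> x \<and> x \<le> B" by simp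
qed

lemma pos_AE_ex:
  assumes "prob_space M" "sets M = sets borel" "A \<in> sets borel" "measure M A > 0"
    "AE x in M. P x"
  shows "\<exists>x\<in>A. P x"
proof (rule ccontr)
  assume "\<not> ?thesis"
  then have "AE x in M. x \<notin> A" using assms(5) by (auto elim: AE_mp)
  moreover have sp: "space M = UNIV" using sets_eq_imp_space_eq[OF assms(2)] by simp
  ultimately have "emeasure M A = 0"
    using AE_iff_measurable[of A M "\<lambda>x. x \<notin> A"] assms(2,3) by auto
  then have "measure M A = 0" by (simp add: measure_def)
  then show False using assms(4) by simp
qed

lemma supp_AE:
  assumes "mixed_strategy B M"
  shows "AE x in M. x \<in> Supp M"
proof -
  note ms = ms_props[OF assms]
  interpret prob_space M by fact
  define F where "F = {ball x e | x e. e > 0 \<and> measure M (ball x e) = 0}"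
  have "\<And>S. S \<in> F \<Longrightarrow> open S" unfolding F_def by auto
  then obtain F' where F': "F' \<subseteq> F" "countable F'" "\<Union>F' = \<Union>F" using Lindelof by metis
  have "(\<Union>i\<in>F'. i) \<in> null_sets M"
  proof (rule null_sets_UN')
    fix i assume "i \<in> F'"
    then obtain x e where i: "i = ball x e" "measure M (ball x e) = 0" using F' F_def by auto
    have "ball x e \<in> sets M" using ms by simp
    then show "i \<in> null_sets M" using i by (simp add: null_sets_def emeasure_eq_measure)
  qed (use F' in auto)
  moreover have "{x \<in> space M. \<not> x \<in> Supp M} \<subseteq> (\<Union>i\<in>F'. i)"
  proof
    fix x assume "x \<in> {x \<in> space M. \<not> x \<in> Supp M}"
    then obtain e where "e > 0" "\<not> measure M (ball x e) > 0" unfolding Supp_def by auto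
    then have "measure M (ball x e) = 0" using measure_nonneg[of M "ball x e"] by linarith
    then have "ball x e \<in> F" using \<open>e > 0\<close> unfolding F_def by auto
    then show "x \<in> (\<Union>i\<in>F'. i)" using F'(3) \<open>e > 0\<close> by (metis Union_iff centre_in_ball image_ident)
  qed
  ultimately show ?thesis by (rule AE_I')
qed

lemma supp_sub:
  assumes "mixed_strategy B M"
  shows "Supp M \<subseteq> {0..B}"
proof
  fix x assume x: "x \<in> Supp M"
  note ms = ms_props[OF assms]
  show "x \<in> {0..B}"
  proof (rule ccontr)
    assume nx: "x \<notin> {0..B}"
    define e where "e = (if x < 0 then -x else x - B)"
    have "e > 0" using nx unfolding e_def by auto
    then have "measure M (ball x e) > 0" using x unfolding Supp_def by auto
    from pos_AE_ex[OF ms(1,2) _ this ms(4)]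
    obtain y where "y \<in> ball x e" "0 \<le> y \<and> y \<le> B" by auto
    then show False using nx unfolding e_def by (auto simp: dist_real_def split: if_splits)
  qed
qed

lemma supp_ne:
  assumes "mixed_strategy B M"
  shows "Supp M \<noteq> {}"
proof
  assume "Supp M = {}"
  note ms = ms_props[OF assms]
  interpret prob_space M by fact
  have "measure M UNIV > 0" using ms(3) prob_space by simp
  from pos_AE_ex[OF ms(1,2) _ this supp_AE[OF assms]]
  obtain y where "y \<in> Supp M" by auto
  then show False using \<open>Supp M = {}\<close> by simp
qed

lemma supp_bdd:
  assumes "mixed_strategy B M"
  shows "bdd_above (Supp M)" "bdd_below (Supp M)"
  using supp_sub[OF assms] unfolding bdd_above_def bdd_below_def by (meson atLeastAtMost_iff subsetD)+

lemma supp_sup_bounds: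
  assumes "mixed_strategy B M"
  shows "0 \<le> Inf (Supp M)" "Inf (Supp M) \<le> Sup (Supp M)" "Sup (Supp M) \<le> B"
proof -
  obtain y where y: "y \<in> Supp M" using supp_ne[OF assms] by blast
  have yy: "0 \<le> y" "y \<le> B" using y supp_sub[OF assms] by auto
  show "0 \<le> Inf (Supp M)" using supp_sub[OF assms] supp_ne[OF assms]
    by (intro cInf_greatest) auto
  show "Inf (Supp M) \<le> Sup (Supp M)"
    using cInf_lower[OF y supp_bdd(2)[OF assms]] cSup_upper[OF y supp_bdd(1)[OF assms]] by linarith
  show "Sup (Supp M) \<le> B" using supp_sub[OF assms] supp_ne[OF assms]
    by (intro cSup_least) auto
qed

lemma AE_supp_bounds:
  assumes "mixed_strategy B M"
  shows "AE x in M. Inf (Supp M) \<le> x \<and> x \<le> Sup (Supp M)"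
  using supp_AE[OF assms]
proof (rule AE_mp)
  show "AE x in M. x \<in> Supp M \<longrightarrow> Inf (Supp M) \<le> x \<and> x \<le> Sup (Supp M)"
    using cInf_lower[OF _ supp_bdd(2)[OF assms]] cSup_upper[OF _ supp_bdd(1)[OF assms]] by auto
qed

lemma ex_above_sup:
  assumes "mixed_strategy B M" "m < Sup (Supp M)" "AE x in M. P x"
  shows "\<exists>x. m < x \<and> P x"
proof -
  note ms = ms_props[OF assms(1)]
  obtain y where y: "y \<in> Supp M" "m < y" using less_cSupD[OF supp_ne[OF assms(1)] assms(2)] by blast
  then have "measure M (ball y (y - m)) > 0" unfolding Supp_def by auto
  from pos_AE_ex[OF ms(1,2) _ this assms(3)]
  obtain x where x: "x \<in> ball y (y - m)" "P x" by auto
  then have "m < x" by (auto simp: dist_real_def abs_if split: if_splits)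
  with x show ?thesis by blast
qed

lemma ex_near_inf:
  assumes "mixed_strategy B M" "d > 0" "AE x in M. P x"
  shows "\<exists>x. Inf (Supp M) \<le> x \<and> x < Inf (Supp M) + d \<and> P x"
proof -
  note ms = ms_props[OF assms(1)]
  obtain y where y: "y \<in> Supp M" "y < Inf (Supp M) + d/2"
    using cInf_lessD[OF supp_ne[OF assms(1)], of "Inf (Supp M) + d/2"] assms(2) by force
  then have mp: "measure M (ball y (d/2)) > 0" unfolding Supp_def using assms(2) by auto
  have ae: "AE x in M. P x \<and> Inf (Supp M) \<le> x"
    using assms(3) AE_supp_bounds[OF assms(1)] by eventually_elim auto
  have "\<exists>x\<in>ball y (d/2). P x \<and> Inf (Supp M) \<le> x"
    by (rule pos_AE_ex[OF ms(1,2) _ mp ae]) simp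
  then obtain x where x: "x \<in> ball y (d/2)" "P x" "Inf (Supp M) \<le> x" by blast
  then have "x < Inf (Supp M) + d" using y by (auto simp: dist_real_def abs_if split: if_splits)
  with x show ?thesis by blast
qed


lemma meas_to_M:
  assumes "sets M = sets borel" "f \<in> borel_measurable borel"
  shows "f \<in> borel_measurable M"
  using assms measurable_cong_sets[OF assms(1) refl] by simp

lemma half_le: "(s::real) < L \<Longrightarrow> e \<le> (L - s) / 2 \<Longrightarrow> s + e \<le> L"
proof -
  assume a: "s < L" "e \<le> (L - s) / 2"
  have "(L - s) / 2 \<le> L - s" using a(1) by simp
  then show ?thesis using a(2) by simp
qed

lemma half_lt: "0 < (a::real) \<Longrightarrow> e \<le> a / 2 \<Longrightarrow> e < a" by linarith

locale player =
  fixes Bi vi Bo vo :: real and Fi Fo :: "real measure"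
  assumes Bi: "0 \<le> Bi" and vi: "0 < vi"
    and msi: "mixed_strategy Bi Fi" and mso: "mixed_strategy Bo Fo"
    and br: "\<And>G. mixed_strategy Bi G \<Longrightarrow> exp_utility Bi vi Bo vo G Fo \<le> exp_utility Bi vi Bo vo Fi Fo"
begin

definition "W x = (\<integral>xo. win_prob Bi vi Bo vo x xo \<partial>Fo)"
definition "g x = (\<integral>xo. utility Bi vi Bo vo x xo \<partial>Fo)"
definition "U = exp_utility Bi vi Bo vo Fi Fo"

lemmas mi = ms_props[OF msi]
lemmas mo = ms_props[OF mso]

sublocale O: prob_space Fo by (rule mo(1))
sublocale I: prob_space Fi by (rule mi(1))

lemma wp_meas2: "(\<lambda>(x, xo). win_prob Bi vi Bo vo x xo) \<in> borel_measurable (borel \<Otimes>\<^sub>M Fo)"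
proof -
  have eq: "measurable (borel \<Otimes>\<^sub>M Fo) (borel :: real measure) = measurable (borel \<Otimes>\<^sub>M borel) borel"
    by (rule measurable_cong_sets[OF sets_pair_measure_cong[OF refl mo(2)] refl])
  have f: "(\<lambda>(x, xo). win_prob Bi vi Bo vo x xo) = (\<lambda>p. win_prob Bi vi Bo vo (fst p) (snd p))"
    by (rule ext) (simp add: case_prod_beta)
  show ?thesis unfolding eq f borel_prod by (rule win_prob_meas)
qed

lemma wp_meas1: "(\<lambda>xo. win_prob Bi vi Bo vo x xo) \<in> borel_measurable Fo"
proof -
  have "(\<lambda>xo::real. (x, xo)) \<in> measurable borel (borel \<Otimes>\<^sub>M borel)"
    by (rule measurable_Pair) auto
  then have m: "(\<lambda>xo::real. (x, xo)) \<in> measurable borel borel" by (simp only: borel_prod)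
  have "(\<lambda>xo. win_prob Bi vi Bo vo (fst (x, xo)) (snd (x, xo))) \<in> borel_measurable borel"
    by (rule measurable_compose[OF m win_prob_meas[of Bi vi Bo vo]])
  then have "(\<lambda>xo. win_prob Bi vi Bo vo x xo) \<in> borel_measurable borel" by (simp only: fst_conv snd_conv)
  then show ?thesis by (rule meas_to_M[OF mo(2)])
qed

lemma wp_int: "integrable Fo (\<lambda>xo. win_prob Bi vi Bo vo x xo)"
proof (rule O.integrable_const_bound[where B=1])
  show "AE xo in Fo. norm (win_prob Bi vi Bo vo x xo) \<le> 1"
    using win_prob_bounds[of Bi vi Bo vo x] by (intro AE_I2) auto
qed (rule wp_meas1)

lemma W_bounds: "0 \<le> W x" "W x \<le> 1"
proof -
  show "0 \<le> W x" unfolding W_def by (rule Bochner_Integration.integral_nonneg) (simp add: win_prob_bounds)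
  have "W x \<le> (\<integral>xo. 1 \<partial>Fo)" unfolding W_def
    by (rule integral_mono[OF wp_int]) (auto simp: win_prob_bounds)
  then show "W x \<le> 1" by (simp add: O.prob_space)
qed

lemma g_eq: "g x = vi * W x - x"
proof -
  have "g x = (\<integral>xo. vi * win_prob Bi vi Bo vo x xo - x \<partial>Fo)"
    unfolding g_def utility_def by simp
  also have "\<dots> = (\<integral>xo. vi * win_prob Bi vi Bo vo x xo \<partial>Fo) - (\<integral>xo. x \<partial>Fo)"
    by (rule Bochner_Integration.integral_diff) (auto intro: wp_int)
  also have "\<dots> = vi * W x - x" unfolding W_def by (simp add: O.prob_space)
  finally show ?thesis .
qed

lemma W_meas: "W \<in> borel_measurable borel"
  unfolding W_def using O.borel_measurable_lebesgue_integral[OF wp_meas2] .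

lemma g_meas: "g \<in> borel_measurable borel"
  unfolding g_eq[abs_def] using W_meas by (intro borel_measurable_diff borel_measurable_times) auto

lemma exp_g: "exp_utility Bi vi Bo vo G Fo = (\<integral>x. g x \<partial>G)"
  unfolding exp_utility_def g_def ..

lemma g_le_U: assumes "0 \<le> x" "x \<le> Bi" shows "g x \<le> U"
proof -
  have ms: "mixed_strategy Bi (return borel x)"
    unfolding mixed_strategy_def using assms
    by (auto simp: prob_space_return measure_return)
  have "exp_utility Bi vi Bo vo (return borel x) Fo = g x"
    unfolding exp_g by (rule integral_return) (auto simp: g_meas)
  then show ?thesis using br[OF ms] unfolding U_def by simp
qed

lemma g_int: "integrable Fi g"
proof (rule I.integrable_const_bound[where B="vi + Bi"])
  show "AE x in Fi. norm (g x) \<le> vi + Bi"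
    using mi(4)
  proof (rule AE_mp, intro AE_I2 impI)
    fix x assume "0 \<le> x \<and> x \<le> Bi"
    moreover have "0 \<le> vi * W x" "vi * W x \<le> vi" using W_bounds[of x] vi by (auto simp: mult_left_le)
    ultimately show "norm (g x) \<le> vi + Bi" unfolding g_eq real_norm_def abs_le_iff by linarith
  qed
  show "g \<in> borel_measurable Fi" using meas_to_M[OF mi(2) g_meas] .
qed

lemma AE_g: "AE x in Fi. g x = U"
proof -
  have U: "U = (\<integral>x. g x \<partial>Fi)" unfolding U_def exp_g ..
  have int: "integrable Fi (\<lambda>x. U - g x)" using g_int by auto
  have nn: "AE x in Fi. 0 \<le> U - g x"
    using mi(4)
  proof (rule AE_mp)
    show "AE x in Fi. 0 \<le> x \<and> x \<le> Bi \<longrightarrow> 0 \<le> U - g x" using g_le_U by (intro AE_I2) auto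
  qed
  have "(\<integral>x. U - g x \<partial>Fi) = (\<integral>x. U \<partial>Fi) - (\<integral>x. g x \<partial>Fi)"
    by (rule Bochner_Integration.integral_diff) (use g_int in auto)
  also have "\<dots> = 0" using U by (simp add: I.prob_space)
  finally have "(\<integral>x. U - g x \<partial>Fi) = 0" .
  then have "AE x in Fi. U - g x = 0" using integral_nonneg_eq_0_iff_AE[OF int nn] by simp
  then show ?thesis by eventually_elim simp
qed

lemma W_win: assumes "AE xo in Fo. xo < x" shows "W x = 1"
proof -
  have "W x = (\<integral>xo. 1 \<partial>Fo)" unfolding W_def
  proof (rule integral_cong_AE)
    show "AE xo in Fo. win_prob Bi vi Bo vo x xo = 1"
      using assms by eventually_elim (simp add: win_prob_def)
  qed (auto simp: wp_meas1)
  then show ?thesis by (simp add: O.prob_space)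
qed

lemma g_win: assumes "AE xo in Fo. xo < x" shows "g x = vi - x"
  using W_win[OF assms] g_eq by simp

lemma int_ind: "integrable Fo (indicator A :: real \<Rightarrow> real)" if "A \<in> sets borel" for A
  using that mo(2) by (intro integrable_real_indicator) (auto simp: O.emeasure_finite less_top[symmetric])

lemma W_le_cdf: "W x \<le> measure Fo {..x}"
proof -
  have "W x \<le> (\<integral>xo. indicator {..x} xo \<partial>Fo)" unfolding W_def
    by (rule integral_mono[OF wp_int int_ind]) (auto simp: win_prob_def indicator_def)
  then show ?thesis using mo(3) by simp
qed

lemma W_ge_cdf: "measure Fo {..<x} \<le> W x"
proof -
  have "(\<integral>xo. indicator {..<x} xo \<partial>Fo) \<le> W x" unfolding W_def
    by (rule integral_mono[OF int_ind wp_int]) (auto simp: win_prob_def indicator_def)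
  then show ?thesis using mo(3) by simp
qed

lemma W_tie: assumes "x \<noteq> L_val Bi Bo vi vo" "AE xo in Fo. x \<le> xo"
  shows "W x \<le> measure Fo {x} / 2"
proof -
  have i: "integrable Fo (\<lambda>xo. indicator {x} xo / 2 :: real)" using int_ind[of "{x}"] by simp
  have "W x \<le> (\<integral>xo. indicator {x} xo / 2 \<partial>Fo)" unfolding W_def
  proof (rule integral_mono_AE[OF wp_int i])
    show "AE xo in Fo. win_prob Bi vi Bo vo x xo \<le> indicator {x} xo / 2"
      using assms(2) by eventually_elim (use assms(1) in \<open>auto simp: win_prob_def indicator_def\<close>)
  qed
  then show ?thesis using mo(3) by simp
qed

lemma U_nonneg: "0 \<le> U"
proof -
  have "0 \<le> vi * W 0" using vi W_bounds[of 0] by simp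
  moreover have "g 0 \<le> U" using g_le_U[of 0] Bi by simp
  ultimately show ?thesis unfolding g_eq by simp
qed

lemma L_le: "L_val Bi Bo vi vo \<le> Bi" "L_val Bi Bo vi vo \<le> vi"
  unfolding L_val_def by auto

lemma si_le_so: "Sup (Supp Fi) \<le> Sup (Supp Fo)"
proof (rule ccontr)
  let ?si = "Sup (Supp Fi)" and ?so = "Sup (Supp Fo)"
  assume "\<not> ?si \<le> ?so"
  define m where "m = (?si + ?so) / 2"
  have b: "0 \<le> ?so" "?si \<le> Bi" using supp_sup_bounds[OF mso] supp_sup_bounds[OF msi] by auto
  have m: "?so < m" "m < ?si" "0 \<le> m" "m \<le> Bi" using \<open>\<not> ?si \<le> ?so\<close> b unfolding m_def by auto
  have AEo: "AE xo in Fo. xo \<le> ?so" using AE_supp_bounds[OF mso] by eventually_elim auto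
  have "\<And>x. ?so < x \<Longrightarrow> g x = vi - x"
  proof -
    fix x assume "?so < x"
    show "g x = vi - x" by (rule g_win) (use AEo in eventually_elim, use \<open>?so < x\<close> in auto)
  qed
  then have gm: "g m = vi - m" using m by simp
  obtain x where x: "m < x" "g x = U" using ex_above_sup[OF msi m(2) AE_g] by blast
  have "g x = vi - x" using \<open>\<And>x. ?so < x \<Longrightarrow> g x = vi - x\<close> x m by simp
  then show False using x gm g_le_U[OF m(3,4)] by simp
qed

lemma si_le_vi: "Sup (Supp Fi) \<le> vi"
proof (rule ccontr)
  assume "\<not> Sup (Supp Fi) \<le> vi"
  then obtain x where x: "vi < x" "g x = U" using ex_above_sup[OF msi _ AE_g, of vi] by force
  have "vi * W x \<le> vi" using W_bounds[of x] vi by (simp add: mult_left_le)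
  then show False using x U_nonneg unfolding g_eq by simp
qed

lemma U_ge: assumes "Sup (Supp Fo) = s" "s < L_val Bi Bo vi vo" shows "vi - s \<le> U"
proof (rule ccontr)
  let ?L = "L_val Bi Bo vi vo"
  assume "\<not> vi - s \<le> U"
  define e where "e = min ((vi - s - U)/2) ((?L - s)/2)"
  have "0 < (vi - s - U)/2" "0 < (?L - s)/2" using \<open>\<not> vi - s \<le> U\<close> assms(2) by simp_all
  then have e01: "0 < e" unfolding e_def by simp
  have e02: "e \<le> (vi - s - U)/2" unfolding e_def by (rule min.cobounded1)
  have e03: "e \<le> (?L - s)/2" unfolding e_def by (rule min.cobounded2)
  note e0 = e01 e02 e03
  have half: "\<And>a ee::real. 0 < a \<Longrightarrow> ee \<le> a / 2 \<Longrightarrow> ee < a" by linarith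
  have e1: "e < vi - s - U" by (rule half) (use e0 \<open>\<not> vi - s \<le> U\<close> in auto)
  have e2: "s + e \<le> ?L" using half_le[OF assms(2) e03] .
  note e = e01 e1 e2
  have s0: "0 \<le> s" using supp_sup_bounds[OF mso] assms(1) by auto
  have AEo: "AE xo in Fo. xo < s + e" using AE_supp_bounds[OF mso] by eventually_elim (use assms(1) e in auto)
  have "g (s + e) = vi - (s + e)" by (rule g_win[OF AEo])
  moreover have "g (s + e) \<le> U" using g_le_U[of "s + e"] e s0 L_le by simp
  ultimately show False using e by simp
qed

lemma cdf_lower: assumes "Sup (Supp Fo) = s" "s < L_val Bi Bo vi vo"
  shows "(vi - s) / vi \<le> measure Fo {..Inf (Supp Fi)}"
proof -
  let ?a = "Inf (Supp Fi)"
  interpret FB: finite_borel_measure Fo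
    by (intro finite_borel_measure.intro finite_borel_measure_axioms.intro O.finite_measure_axioms mo(2))
  have ae: "AE x in Fi. g x = U \<and> 0 \<le> x" using AE_g mi(4) by eventually_elim auto
  have bound: "(vi - s) / vi \<le> cdf Fo y" if ay: "?a < y" for y
  proof -
    obtain x where x: "?a \<le> x" "x < ?a + (y - ?a)" "g x = U \<and> 0 \<le> x"
      using ex_near_inf[OF msi _ ae, of "y - ?a"] ay by auto
    have "vi - s \<le> vi * W x" using x U_ge[OF assms] unfolding g_eq by simp
    also have "W x \<le> measure Fo {..x}" by (rule W_le_cdf)
    also have "measure Fo {..x} \<le> measure Fo {..y}"
      using x mo(2) by (intro O.finite_measure_mono) auto
    finally have "vi - s \<le> vi * cdf Fo y" using vi unfolding cdf_def by (simp add: mult_left_mono)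
    then show ?thesis using vi by (simp add: pos_divide_le_eq mult.commute)
  qed
  have lim: "(cdf Fo \<longlongrightarrow> cdf Fo ?a) (at_right ?a)"
    using FB.cdf_is_right_cont[of ?a] by (simp add: continuous_within)
  have "(vi - s) / vi \<le> cdf Fo ?a"
  proof (rule tendsto_lowerbound[OF lim])
    show "\<forall>\<^sub>F y in at_right ?a. (vi - s) / vi \<le> cdf Fo y"
      using eventually_at_right_less[of ?a] by eventually_elim (rule bound)
  qed simp
  then show ?thesis unfolding cdf_def .
qed

lemma final_contra:
  assumes "0 \<le> a" "a < L_val Bi Bo vi vo" "AE x in Fi. a \<le> x" "AE xo in Fo. a \<le> xo"
    "measure Fi {..a} > 0" "measure Fo {..a} > 0"
  shows False
proof -
  let ?L = "L_val Bi Bo vi vo"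
  define q where "q = measure Fo {..a}"
  have q: "0 < q" using assms(6) unfolding q_def .
  have ae: "AE x in Fi. g x = U \<and> a \<le> x" using AE_g assms(3) by eventually_elim auto
  obtain x where "x \<in> {..a}" "g x = U \<and> a \<le> x"
    using pos_AE_ex[OF mi(1,2) _ assms(5) ae] by auto
  then have ga: "g a = U" by auto
  have "W a \<le> measure Fo {a} / 2" by (rule W_tie) (use assms(2,4) in auto)
  moreover have "measure Fo {a} \<le> q" unfolding q_def using mo(2) by (intro O.finite_measure_mono) auto
  ultimately have Wa: "W a \<le> q / 2" by simp
  define e where "e = min (vi * q / 4) (?L - a)"
  have vq: "0 < vi * q" using vi q by simp
  have e: "0 < e" "e \<le> vi * q / 4" "e \<le> ?L - a"
  proof -
    have "0 < vi * q / 4" "0 < ?L - a" using vq assms(2) by simp_all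
    then show "0 < e" unfolding e_def by simp
    show "e \<le> vi * q / 4" unfolding e_def by (rule min.cobounded1)
    show "e \<le> ?L - a" unfolding e_def by (rule min.cobounded2)
  qed
  then have e: "0 < e" "e \<le> vi * q / 4" "a + e \<le> ?L" by linarith+
  have "q \<le> measure Fo {..<a + e}" unfolding q_def using mo(2) e by (intro O.finite_measure_mono) auto
  also have "\<dots> \<le> W (a + e)" by (rule W_ge_cdf)
  finally have "vi * q \<le> vi * W (a + e)" using vi by (simp add: mult_left_mono)
  moreover have "g (a + e) \<le> U" using g_le_U[of "a + e"] assms(1) e L_le by simp
  moreover have "vi * W a \<le> vi * (q / 2)" using Wa vi by (simp add: mult_left_mono)
  ultimately show False using ga e vq unfolding g_eq by simp
qed

end

lemma L_val_sym: "L_val B2 B1 v2 v1 = L_val B1 B2 v1 v2"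
  unfolding L_val_def by (simp add: min_def)

theorem lemma2:
  fixes B1 B2 v1 v2 :: real and F1 F2 :: "real measure"
  assumes "B1 \<ge> 0" and "B2 \<ge> 0" and "v1 > 0" and "v2 > 0"
    and "nash_eq B1 v1 B2 v2 F1 F2"
  shows "Sup (Supp F1) = L_val B1 B2 v1 v2 \<and> Sup (Supp F2) = L_val B1 B2 v1 v2"
proof -
  have ms1: "mixed_strategy B1 F1" and ms2: "mixed_strategy B2 F2" using assms(5) unfolding nash_eq_def by auto
  interpret P1: player B1 v1 B2 v2 F1 F2
    using assms unfolding nash_eq_def by unfold_locales auto
  interpret P2: player B2 v2 B1 v1 F2 F1
    using assms unfolding nash_eq_def by unfold_locales auto
  let ?L = "L_val B1 B2 v1 v2"
  define s where "s = Sup (Supp F1)"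
  have s2: "Sup (Supp F2) = s" using P1.si_le_so P2.si_le_so unfolding s_def by simp
  have b: "s \<le> B1" "s \<le> v1" "s \<le> B2" "s \<le> v2"
    using supp_sup_bounds[OF ms1] supp_sup_bounds[OF ms2] P1.si_le_vi P2.si_le_vi s2
    unfolding s_def by auto
  then have sL: "s \<le> ?L" unfolding L_val_def by simp
  have "\<not> s < ?L"
  proof
    assume sl: "s < ?L"
    have sl2: "s < L_val B2 B1 v2 v1" using sl L_val_sym[of B2 B1 v2 v1] by simp
    define a1 where "a1 = Inf (Supp F1)"
    define a2 where "a2 = Inf (Supp F2)"
    have c1: "(v1 - s) / v1 \<le> measure F2 {..a1}" using P1.cdf_lower[OF s2 sl] unfolding a1_def .
    have c2: "(v2 - s) / v2 \<le> measure F1 {..a2}" using P2.cdf_lower[OF s_def[symmetric] sl2] unfolding a2_def .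
    have "s < v1" "s < v2" using sl P1.L_le(2) P2.L_le(2) L_val_sym[of B2 B1 v2 v1] by auto
    then have p: "0 < (v1 - s) / v1" "0 < (v2 - s) / v2" using assms(3,4) by auto
    have m1: "0 < measure F2 {..a1}" using c1 p by linarith
    have m2: "0 < measure F1 {..a2}" using c2 p by linarith
    have AE1: "AE x in F1. a1 \<le> x" using AE_supp_bounds[OF ms1] unfolding a1_def by eventually_elim auto
    have AE2: "AE x in F2. a2 \<le> x" using AE_supp_bounds[OF ms2] unfolding a2_def by eventually_elim auto
    obtain x where "x \<in> {..a1}" "a2 \<le> x" using pos_AE_ex[OF P1.mo(1,2) _ m1 AE2] by auto
    then have "a2 \<le> a1" by simp
    obtain y where "y \<in> {..a2}" "a1 \<le> y" using pos_AE_ex[OF P1.mi(1,2) _ m2 AE1] by auto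
    then have "a1 \<le> a2" by simp
    then have a: "a1 = a2" using \<open>a2 \<le> a1\<close> by simp
    have a0: "0 \<le> a1" "a1 \<le> s" using supp_sup_bounds[OF ms1] unfolding a1_def s_def by auto
    show False
    proof (rule P1.final_contra[of a1])
      show "0 \<le> a1" by (rule a0(1))
      show "a1 < ?L" using a0 sl by simp
      show "AE x in F1. a1 \<le> x" by (rule AE1)
      show "AE xo in F2. a1 \<le> xo" using AE2 a by simp
      show "0 < measure F1 {..a1}" using m2 a by simp
      show "0 < measure F2 {..a1}" by (rule m1)
    qed
  qed
  then have "s = ?L" using sL by simp
  then show ?thesis using s2 s_def by simp
qed

end
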